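(* Let $\Sigma=\{0,1\}$ and let $w\in\Sigma^+\setminus\Sigma^*11\Sigma^*$ with $|w|=k\ge1$. Then (1) $w\in0\Sigma^*$ if and only if $0\le\mathrm{val}_{\mathcal{F}c}(w)<F_{k-1}$; (2) $w\in1\Sigma^*$ if and only if $-F_{k-2}\le\mathrm{val}_{\mathcal{F}c}(w)<0$.
   Context: Fibonacci numbers: $F_0=1$, $F_1=2$, $F_n=F_{n-1}+F_{n-2}$ for $n\ge2$, extended to negative indices by the same recurrence ($F_{-1}=1$, $F_{-2}=0$). For a nonempty binary word $w=w_{k-1}\cdots w_0$ (digits indexed from the right), $\mathrm{val}_{\mathcal{F}c}(w)=\sum_{i=0}^{k-1}w_iF_i-w_{k-1}F_k$. *)

theory Defs
  imports Main
begin

(* G m = F_(m-2): G 0 = F_(-2) = 0, G 1 = F_(-1) = 1, G 2 = F_0 = 1, G 3 = F_1 = 2 *)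
fun fibG :: "nat \<Rightarrow> int" where
  "fibG 0 = 0"
| "fibG (Suc 0) = 1"
| "fibG (Suc (Suc m)) = fibG (Suc m) + fibG m"

(* Fibonacci numbers F_n with F_0 = 1, F_1 = 2, extended to n >= -2 *)
definition Fib :: "int \<Rightarrow> int" where
  "Fib n = fibG (nat (n + 2))"

(* a word w = w_(k-1) ... w_0 is a list written left to right, so hd w = w_(k-1)
   and the digit w_i is w ! (length w - 1 - i) *)
definition digit :: "nat list \<Rightarrow> nat \<Rightarrow> nat" where
  "digit w i = w ! (length w - 1 - i)"

definition valFc :: "nat list \<Rightarrow> int" where
  "valFc w = (\<Sum>i<length w. int (digit w i) * Fib (int i))
             - int (digit w (length w - 1)) * Fib (int (length w))"

definition has11 :: "nat list \<Rightarrow> bool" where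
  "has11 w \<longleftrightarrow> (\<exists>u v. w = u @ [1, 1] @ v)"

end

theory Submission
  imports Defs
begin

fun zv :: "nat list \<Rightarrow> int" where
  "zv [] = 0"
| "zv (a # t) = int a * fibG (length t + 2) + zv t"

lemma fibG_nonneg: "fibG n \<ge> 0"
  by (induction n rule: fibG.induct) auto

lemma fibG_mono: "fibG n \<le> fibG (Suc n)"
  by (induction n rule: fibG.induct) (auto simp: fibG_nonneg)

lemma sum_zv: "(\<Sum>i<length w. int (digit w i) * Fib (int i)) = zv w"
proof (induction w)
  case Nil then show ?case by simp
next
  case (Cons a t)
  have "(\<Sum>i<length (a#t). int (digit (a#t) i) * Fib (int i))
      = (\<Sum>i<length t. int (digit (a#t) i) * Fib (int i)) + int a * Fib (int (length t))"
    by (simp add: digit_def)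
  also have "(\<Sum>i<length t. int (digit (a#t) i) * Fib (int i))
      = (\<Sum>i<length t. int (digit t i) * Fib (int i))"
    proof (rule sum.cong)
    fix i assume "i \<in> {..<length t}"
    hence "length t - i = Suc (length t - 1 - i)" by auto
    thus "int (digit (a#t) i) * Fib (int i) = int (digit t i) * Fib (int i)"
      by (simp add: digit_def)
  qed simp
  finally show ?case using Cons
    by (simp add: Fib_def nat_add_distrib)
qed

lemma no11_tl: "\<not> has11 (a # t) \<Longrightarrow> \<not> has11 t"
  unfolding has11_def by (metis append_Cons)

lemma no11_11: "\<not> has11 (1 # b # u) \<Longrightarrow> b \<noteq> 1"
  unfolding has11_def by force

lemma zv_bound: "set w \<subseteq> {0,1} \<Longrightarrow> \<not> has11 w \<Longrightarrow> 0 \<le> zv w \<and> zv w < fibG (length w + 2)"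
proof (induction w rule: length_induct)
  case (1 w)
  show ?case
  proof (cases w)
    case Nil then show ?thesis by simp
  next
    case (Cons a t)
    have t: "0 \<le> zv t \<and> zv t < fibG (length t + 2)"
      using 1 Cons no11_tl by auto
    have a: "a = 0 \<or> a = 1" using 1 Cons by auto
    show ?thesis
    proof (cases "a = 0")
      case True
      then show ?thesis using t Cons fibG_mono[of "length t + 2"] by simp
    next
      case False
      hence a1: "a = 1" using a by simp
      show ?thesis
      proof (cases t)
        case Nil then show ?thesis using Cons a1 by (simp add: numeral_eq_Suc)
      next
        case (Cons b u)
        have b: "b = 0" using 1 \<open>w = a # t\<close> Cons a1 no11_11[of b u] by auto
        have "\<not> has11 u" using 1(3) \<open>w = a # t\<close> Cons no11_tl by blast
        moreover have "set u \<subseteq> {0,1}" using 1(2) \<open>w = a # t\<close> Cons by auto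
        moreover have "length u < length w" using \<open>w = a # t\<close> Cons by simp
        ultimately have u: "0 \<le> zv u \<and> zv u < fibG (length u + 2)"
          using 1(1) by blast
        show ?thesis using \<open>w = a # t\<close> Cons a1 b u fibG_nonneg[of "length u + 3"]
          by (simp add: numeral_eq_Suc)
      qed
    qed
  qed
qed

theorem lemma6p4:
  fixes w :: "nat list" and k :: nat
  assumes "set w \<subseteq> {0, 1}"
    and "\<not> has11 w"
    and "length w = k" and "k \<ge> 1"
  shows "(hd w = 0 \<longleftrightarrow> 0 \<le> valFc w \<and> valFc w < Fib (int k - 1))
       \<and> (hd w = 1 \<longleftrightarrow> - Fib (int k - 2) \<le> valFc w \<and> valFc w < 0)"
proof -
  obtain a t where w: "w = a # t" using assms(3,4) by (cases w) auto
  have k: "k = length t + 1" using w assms(3) by simp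
  have val: "valFc w = zv w - int a * fibG (length t + 3)"
    unfolding valFc_def sum_zv using w by (simp add: digit_def Fib_def nat_add_distrib add.commute)
  have F1: "Fib (int k - 1) = fibG (length t + 2)" using k by (simp add: Fib_def nat_add_distrib)
  have F2: "Fib (int k - 2) = fibG (length t + 1)" using k by (simp add: Fib_def nat_add_distrib)
  have a: "a = 0 \<or> a = 1" using assms(1) w by auto
  show ?thesis
  proof (cases "a = 0")
    case True
    have "0 \<le> zv t \<and> zv t < fibG (length t + 2)"
      using zv_bound[of t] assms(1,2) w no11_tl by auto
    then show ?thesis using True w val F1 by auto
  next
    case False
    hence a1: "a = 1" using a by simp
    show ?thesis
    proof (cases t)
      case Nil then show ?thesis using w a1 val F1 F2 by (simp add: Fib_def numeral_eq_Suc)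
    next
      case (Cons b u)
      have b: "b = 0" using assms(1,2) w Cons a1 no11_11[of b u] by auto
      have "\<not> has11 u" using assms(2) w Cons no11_tl by blast
      moreover have "set u \<subseteq> {0,1}" using assms(1) w Cons by auto
      ultimately have u: "0 \<le> zv u \<and> zv u < fibG (length u + 2)"
        using zv_bound[of u] by blast
      have v: "valFc w = zv u - fibG (length u + 2)"
        using val w Cons a1 b by (simp add: numeral_eq_Suc)
      have "fibG (length t + 1) = fibG (length u + 2)" using Cons by simp
      then show ?thesis using w a1 v u F2 by auto
    qed
  qed
qed

end
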